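(* Let $\boldsymbol{\beta}=(\beta_1,\dots,\beta_p)$ be an alternate base such that $\delta=\prod_{i=1}^p\beta_i$ is a Pisot unit and $\beta_1,\dots,\beta_p\in\mathbb{Q}(\delta)$. Then there exists a constant $\kappa>0$ such that for every $z\in\mathbb{N}_{\boldsymbol{\beta}}\setminus\delta\,\mathbb{N}_{\boldsymbol{\beta}}$ there is a non-identical field embedding $\psi:\mathbb{Q}(\delta)\to\mathbb{C}$ with $|\psi(z)|\ge\kappa$.
   Context: An alternate base is a $p$-tuple $\boldsymbol{\beta}=(\beta_1,\dots,\beta_p)$ of reals $\beta_i>1$, identified with the purely periodic sequence $(\beta_k)_{k\ge1}$, $\beta_{k+p}=\beta_k$. For $x\in[0,1)$ the $\boldsymbol{\beta}$-expansion $d_{\boldsymbol{\beta}}(x)=a_1a_2\cdots$ is given by the greedy algorithm $r_0=x$, $a_{k+1}=\lfloor\beta_{k+1}r_k\rfloor$, $r_{k+1}=\beta_{k+1}r_k-a_{k+1}$. For $x\ge0$, choose $k\in\mathbb{N}$ with $z=x/\delta^k\in[0,1)$, write $d_{\boldsymbol{\beta}}(z)=a_1a_2\cdots$ and set $d_{\boldsymbol{\beta}}(x)=a_1\cdots a_{pk}\,\bullet\, a_{pk+1}a_{pk+2}\cdots$ (independent of $k$ up to leading zeros). $\mathbb{N}_{\boldsymbol{\beta}}=\{x\ge0: d_{\boldsymbol{\beta}}(x)=a_1\cdots a_n\bullet 0^\omega\}$ is the set of $\boldsymbol{\beta}$-integers, and $\delta\,\mathbb{N}_{\boldsymbol{\beta}}=\{\delta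 w: w\in\mathbb{N}_{\boldsymbol{\beta}}\}$. A Pisot unit is an algebraic unit $\delta>1$ all of whose other conjugates have modulus $<1$. *)

theory Defs
  imports "HOL-Analysis.Analysis" "HOL-Computational_Algebra.Polynomial"
begin

text \<open>An alternate base is a nonempty list bs = [beta_1,...,beta_p] of reals > 1,
  identified with the periodic sequence beta_k (k >= 1), beta_{k+p} = beta_k.\<close>

definition alt_base :: "real list \<Rightarrow> bool" where
  "alt_base bs \<longleftrightarrow> bs \<noteq> [] \<and> (\<forall>b\<in>set bs. b > 1)"

definition bseq :: "real list \<Rightarrow> nat \<Rightarrow> real" where
  "bseq bs k = bs ! ((k - 1) mod length bs)"

definition delta :: "real list \<Rightarrow> real" where
  "delta bs = prod_list bs"

fun grem :: "real list \<Rightarrow> real \<Rightarrow> nat \<Rightarrow> real" where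
  "grem bs x 0 = x"
| "grem bs x (Suc k) = bseq bs (Suc k) * grem bs x k - of_int \<lfloor>bseq bs (Suc k) * grem bs x k\<rfloor>"

definition gdigit :: "real list \<Rightarrow> real \<Rightarrow> nat \<Rightarrow> int" where
  "gdigit bs x k = \<lfloor>bseq bs k * grem bs x (k - 1)\<rfloor>"
  \<comment> \<open>the digit a_k, for k >= 1\<close>

text \<open>beta-integers: x >= 0 whose expansion a_1...a_{pk} . a_{pk+1}... has all digits after
  the radix point equal to zero (for some, equivalently every, admissible k).\<close>

definition beta_integers :: "real list \<Rightarrow> real set" where
  "beta_integers bs = {x. x \<ge> 0 \<and> (\<exists>k::nat. x / delta bs ^ k < 1 \<and>
      (\<forall>j > length bs * k. gdigit bs (x / delta bs ^ k) j = 0))}"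

definition pisot_unit :: "real \<Rightarrow> bool" where
  "pisot_unit d \<longleftrightarrow> d > 1 \<and> (\<exists>p :: int poly. lead_coeff p = 1 \<and> irreducible p \<and>
      poly (map_poly of_int p) d = 0 \<and> (coeff p 0 = 1 \<or> coeff p 0 = -1) \<and>
      (\<forall>z::complex. poly (map_poly of_int p) z = 0 \<and> z \<noteq> complex_of_real d \<longrightarrow> cmod z < 1))"

definition QQ :: "real \<Rightarrow> real set" where
  "QQ d = {x. \<exists>q :: rat poly. x = poly (map_poly of_rat q) d}"

definition field_embedding :: "real set \<Rightarrow> (real \<Rightarrow> complex) \<Rightarrow> bool" where
  "field_embedding K \<psi> \<longleftrightarrow> \<psi> 1 = 1 \<and>
     (\<forall>x\<in>K. \<forall>y\<in>K. \<psi> (x + y) = \<psi> x + \<psi> y \<and> \<psi> (x * y) = \<psi> x * \<psi> y)"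

end

theory Submission
  imports Defs "Berlekamp_Zassenhaus.Factorize_Rat_Poly"
begin


lemma bseq_in_set: assumes "bs \<noteq> []" shows "bseq bs k \<in> set bs"
  using assms unfolding bseq_def by auto

lemma bseq_gt1: assumes "alt_base bs" shows "bseq bs k > 1"
  using assms bseq_in_set[of bs k] unfolding alt_base_def by auto

lemma bseq_period: assumes "k \<ge> 1" shows "bseq bs (m * length bs + k) = bseq bs k"
proof -
  have "(m * length bs + k - 1) = (k - 1) + m * length bs" using assms by simp
  then show ?thesis unfolding bseq_def by simp
qed

lemma grem_Suc': "grem bs x (Suc k) = bseq bs (Suc k) * grem bs x k - of_int (gdigit bs x (Suc k))"
  by (simp add: gdigit_def)

lemma grem_bounds: assumes "0 \<le> x" "x < 1" shows "0 \<le> grem bs x k \<and> grem bs x k < 1"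
proof (cases k)
  case 0 then show ?thesis using assms by simp
next
  case (Suc n) then show ?thesis by simp linarith
qed

lemma grem_shift: "grem bs x (m * length bs + i) = grem bs (grem bs x (m * length bs)) i"
proof (induction i)
  case 0 then show ?case by simp
next
  case (Suc i)
  have "bseq bs (Suc (m * length bs + i)) = bseq bs (Suc i)"
    using bseq_period[where k="Suc i" and m=m and bs=bs] by simp
  then show ?case using Suc by simp
qed

lemma grem_zero: assumes "grem bs x k = 0" shows "grem bs x (k + j) = 0"
  using assms by (induction j) auto

lemma grem_zero': assumes "grem bs x k = 0" "k \<le> n" shows "grem bs x n = 0"
  using grem_zero[OF assms(1), of "n - k"] assms(2) by simp

lemma gdigit_bounds: assumes "alt_base bs" "0 \<le> x" "x < 1" "k \<ge> 1"
  shows "0 \<le> gdigit bs x k \<and> of_int (gdigit bs x k) \<le> bseq bs k"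
proof -
  have g: "0 \<le> grem bs x (k-1)" "grem bs x (k-1) < 1" using grem_bounds[OF assms(2,3)] by auto
  have b: "bseq bs k > 1" using bseq_gt1[OF assms(1)] .
  have "0 \<le> bseq bs k * grem bs x (k-1)" using g b by simp
  moreover have "bseq bs k * grem bs x (k-1) \<le> bseq bs k" using g b
    by (simp add: mult_left_le)
  ultimately show ?thesis unfolding gdigit_def
    by (meson floor_le_iff le_floor_iff of_int_floor_le order_trans zero_le_floor)
qed

lemma digits_zero_grem:
  assumes ab: "alt_base bs" and x: "0 \<le> x" "x < 1" and z: "\<forall>j > N. gdigit bs x j = 0"
  shows "grem bs x N = 0"
proof (rule ccontr)
  assume ne: "grem bs x N \<noteq> 0"
  define b0 where "b0 = Min (set bs)"
  have bsne: "bs \<noteq> []" using ab unfolding alt_base_def by auto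
  have b0: "b0 > 1" unfolding b0_def using ab bsne unfolding alt_base_def by auto
  have bge: "bseq bs k \<ge> b0" for k unfolding b0_def using bseq_in_set[OF bsne] by simp
  have pos: "grem bs x N > 0" using ne grem_bounds[OF x, of bs N] by auto
  have grow: "grem bs x (N + j) \<ge> b0 ^ j * grem bs x N" for j
  proof (induction j)
    case 0 then show ?case by simp
  next
    case (Suc j)
    have "gdigit bs x (Suc (N+j)) = 0" using z by simp
    then have "grem bs x (N + Suc j) = bseq bs (Suc (N + j)) * grem bs x (N + j)"
      using grem_Suc'[of bs x "N+j"] by simp
    also have "\<dots> \<ge> b0 * (b0 ^ j * grem bs x N)"
      using Suc bge[of "Suc (N+j)"] b0 pos
      by (intro mult_mono) auto
    finally show ?case by (simp add: mult.assoc)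
  qed
  obtain j where j: "1 / grem bs x N < b0 ^ j" using real_arch_pow[OF b0] by blast
  have "1 < b0 ^ j * grem bs x N" using j pos by (simp add: field_simps)
  also have "\<dots> \<le> grem bs x (N + j)" using grow .
  finally show False using grem_bounds[OF x, of bs "N+j"] by simp
qed



lemma bseq_nonneg: assumes "alt_base bs" shows "0 \<le> bseq bs k"
  using bseq_gt1[OF assms, of k] by simp

lemma block_rec:
  "(\<Prod>k=1..i. bseq bs k) * x = grem bs x i + (\<Sum>k=1..i. of_int (gdigit bs x k) * (\<Prod>l=Suc k..i. bseq bs l))"
proof (induction i)
  case 0 then show ?case by simp
next
  case (Suc i)
  have S: "(\<Sum>k=1..Suc i. of_int (gdigit bs x k) * (\<Prod>l=Suc k..Suc i. bseq bs l))
     = (\<Sum>k=1..i. of_int (gdigit bs x k) * (\<Prod>l=Suc k..Suc i. bseq bs l)) + of_int (gdigit bs x (Suc i))"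
    by (simp add: sum.nat_ivl_Suc')
  have S2: "(\<Sum>k=1..i. of_int (gdigit bs x k) * (\<Prod>l=Suc k..Suc i. bseq bs l))
     = bseq bs (Suc i) * (\<Sum>k=1..i. of_int (gdigit bs x k) * (\<Prod>l=Suc k..i. bseq bs l))"
    by (simp add: sum_distrib_left prod.nat_ivl_Suc' algebra_simps)
  have "(\<Prod>k=1..Suc i. bseq bs k) * x = bseq bs (Suc i) * ((\<Prod>k=1..i. bseq bs k) * x)"
    by (simp add: prod.nat_ivl_Suc')
  also have "\<dots> = bseq bs (Suc i) * grem bs x i + bseq bs (Suc i) * (\<Sum>k=1..i. of_int (gdigit bs x k) * (\<Prod>l=Suc k..i. bseq bs l))"
    using Suc by (simp add: algebra_simps)
  also have "\<dots> = grem bs x (Suc i) + (\<Sum>k=1..Suc i. of_int (gdigit bs x k) * (\<Prod>l=Suc k..Suc i. bseq bs l))"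
    unfolding S S2 grem_Suc' by simp
  finally show ?case .
qed

lemma delta_prod: assumes "bs \<noteq> []" shows "delta bs = (\<Prod>k=1..length bs. bseq bs k)"
proof -
  have "(\<Prod>k=1..length bs. bseq bs k) = (\<Prod>k\<in>Suc ` {0..<length bs}. bseq bs k)"
    by (simp add: atLeastLessThanSuc_atLeastAtMost image_Suc_atLeastLessThan)
  also have "\<dots> = (\<Prod>k\<in>{0..<length bs}. bseq bs (Suc k))"
    by (subst prod.reindex) auto
  also have "\<dots> = (\<Prod>k\<in>{0..<length bs}. bs ! k)"
    by (rule prod.cong) (auto simp: bseq_def)
  finally show ?thesis unfolding delta_def by (simp add: prod.list_conv_set_nth)
qed

lemma prod_bseq_mono: assumes "alt_base bs" "i \<le> j"
  shows "(\<Prod>k=1..i. bseq bs k) \<le> (\<Prod>k=1..j. bseq bs k)"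
  using assms(2)
proof (induction j)
  case 0 then show ?case by simp
next
  case (Suc j)
  show ?case
  proof (cases "i = Suc j")
    case False
    then have "i \<le> j" using Suc by simp
    then have "(\<Prod>k=1..i. bseq bs k) \<le> (\<Prod>k=1..j. bseq bs k)" using Suc by simp
    also have "\<dots> \<le> bseq bs (Suc j) * (\<Prod>k=1..j. bseq bs k)"
    proof -
      have "0 \<le> (\<Prod>k=1..j. bseq bs k)" using bseq_nonneg[OF assms(1)] by (intro prod_nonneg) auto
      then show ?thesis using bseq_gt1[OF assms(1), of "Suc j"] by (simp add: mult_le_cancel_right1)
    qed
    finally show ?thesis by (simp add: prod.nat_ivl_Suc' mult.commute)
  qed simp
qed

lemma delta_gt1: assumes "alt_base bs" shows "delta bs > 1"
proof -
  have ne: "bs \<noteq> []" using assms unfolding alt_base_def by auto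
  have "(\<Prod>k=1..1. bseq bs k) \<le> (\<Prod>k=1..length bs. bseq bs k)"
    using ne by (intro prod_bseq_mono[OF assms]) (cases bs, auto)
  then show ?thesis using bseq_gt1[OF assms, of 1] delta_prod[OF ne] by simp
qed

lemma witness_Suc:
  assumes ab: "alt_base bs" and x: "0 \<le> x" "x < 1"
    and dz: "\<forall>j > length bs * k. gdigit bs x j = 0"
  shows "\<forall>j > length bs * Suc k. gdigit bs (x / delta bs) j = 0"
proof -
  define p where "p = length bs"
  define y where "y = x / delta bs"
  have ne: "bs \<noteq> []" using ab unfolding alt_base_def by auto
  have d1: "delta bs > 1" using delta_gt1[OF ab] .
  have y0: "0 \<le> y" using x d1 unfolding y_def by simp
  have init: "grem bs y i = y * (\<Prod>k=1..i. bseq bs k)" if "i \<le> p" for i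
    using that
  proof (induction i)
    case 0 then show ?case by simp
  next
    case (Suc i)
    define t where "t = y * (\<Prod>k=1..Suc i. bseq bs k)"
    have t0: "0 \<le> t" unfolding t_def using y0 bseq_nonneg[OF ab]
      by (intro mult_nonneg_nonneg prod_nonneg) auto
    have "t \<le> y * (\<Prod>k=1..p. bseq bs k)" unfolding t_def
      using prod_bseq_mono[OF ab Suc.prems] y0 by (simp add: mult_left_mono)
    also have "\<dots> = x" unfolding y_def p_def delta_prod[OF ne, symmetric] using d1 by simp
    finally have t1: "t < 1" using x by simp
    have gi: "grem bs y i = y * (\<Prod>k=1..i. bseq bs k)" using Suc.IH Suc.prems by simp
    have bt: "bseq bs (Suc i) * grem bs y i = t"
      by (simp add: t_def gi prod.nat_ivl_Suc' algebra_simps)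
    moreover have "\<lfloor>t\<rfloor> = 0" using t0 t1 by (simp add: floor_eq_iff)
    ultimately have "grem bs y (Suc i) = t" by simp
    then show ?case by (simp add: t_def)
  qed
  have gp: "grem bs y p = x"
    using init[of p] d1 unfolding y_def p_def delta_prod[OF ne, symmetric] by simp
  show ?thesis
  proof (intro allI impI)
    fix j assume j: "length bs * Suc k < j"
    define j' where "j' = j - p"
    have jj: "j = 1 * p + j'" and j'1: "j' \<ge> 1" and j'k: "j' > length bs * k"
      using j unfolding j'_def p_def by auto
    have "grem bs y (j - 1) = grem bs x (j' - 1)"
    proof -
      have "j - 1 = 1 * p + (j' - 1)" using jj j'1 by simp
      then show ?thesis using grem_shift[of bs y 1 "j' - 1"] gp unfolding p_def by simp
    qed
    moreover have "bseq bs j = bseq bs j'" using jj bseq_period[OF j'1, of bs 1] unfolding p_def by simp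
    ultimately have "gdigit bs y j = gdigit bs x j'" unfolding gdigit_def by simp
    then show "gdigit bs (x / delta bs) j = 0" using dz j'k unfolding y_def by simp
  qed
qed

lemma beta_int_witness:
  assumes ab: "alt_base bs" and z: "z \<in> beta_integers bs"
  shows "\<exists>k0. \<forall>k\<ge>k0. 0 \<le> z \<and> z / delta bs ^ k < 1 \<and> (\<forall>j > length bs * k. gdigit bs (z / delta bs ^ k) j = 0)"
proof -
  obtain k0 where z0: "z \<ge> 0" and k0: "z / delta bs ^ k0 < 1" "\<forall>j > length bs * k0. gdigit bs (z / delta bs ^ k0) j = 0"
    using z unfolding beta_integers_def by auto
  have d1: "delta bs > 1" using delta_gt1[OF ab] .
  have "z / delta bs ^ (k0 + n) < 1 \<and> (\<forall>j > length bs * (k0 + n). gdigit bs (z / delta bs ^ (k0 + n)) j = 0)" for n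
  proof (induction n)
    case 0 then show ?case using k0 by simp
  next
    case (Suc n)
    have e: "z / delta bs ^ (k0 + Suc n) = z / delta bs ^ (k0 + n) / delta bs" by simp
    have nn: "0 \<le> z / delta bs ^ (k0 + n)" using z0 d1 by simp
    have "z / delta bs ^ (k0 + n) / delta bs \<le> z / delta bs ^ (k0 + n)" using nn d1 z0
      by (simp add: divide_le_eq mult_le_cancel_left1) 
    then have "z / delta bs ^ (k0 + n) / delta bs < 1" using Suc by linarith
    moreover have "\<forall>j > length bs * Suc (k0 + n). gdigit bs (z / delta bs ^ (k0 + n) / delta bs) j = 0"
      using witness_Suc[OF ab nn] Suc by blast
    ultimately show ?case unfolding e by simp
  qed
  then show ?thesis using z0 by (metis le_add_diff_inverse)
qed



interpretation of_rat_poly_hom: map_poly_comm_ring_hom "of_rat :: rat \<Rightarrow> 'a :: field_char_0" ..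


lemma QQ_of_rat: "of_rat c \<in> QQ d"
  unfolding QQ_def by (rule CollectI, rule exI[of _ "[:c:]"]) (simp add: hom_distribs)

lemma QQ_add: assumes "x \<in> QQ d" "y \<in> QQ d" shows "x + y \<in> QQ d"
proof -
  obtain q r where "x = poly (map_poly of_rat q) d" "y = poly (map_poly of_rat r) d" using assms unfolding QQ_def by auto
  then have "x + y = poly (map_poly of_rat (q + r)) d" by (simp add: hom_distribs)
  then show ?thesis unfolding QQ_def by blast
qed

lemma QQ_mult: assumes "x \<in> QQ d" "y \<in> QQ d" shows "x * y \<in> QQ d"
proof -
  obtain q r where "x = poly (map_poly of_rat q) d" "y = poly (map_poly of_rat r) d" using assms unfolding QQ_def by auto
  then have "x * y = poly (map_poly of_rat (q * r)) d" by (simp add: hom_distribs)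
  then show ?thesis unfolding QQ_def by blast
qed

lemma QQ_d: "d \<in> QQ d"
  unfolding QQ_def by (rule CollectI, rule exI[of _ "[:0,1:]"]) (simp add: hom_distribs)

lemma QQ_of_int: "of_int c \<in> QQ d"
  using QQ_of_rat[of "of_int c" d] by simp

lemma QQ_sum: "finite A \<Longrightarrow> (\<And>a. a \<in> A \<Longrightarrow> f a \<in> QQ d) \<Longrightarrow> sum f A \<in> QQ d"
  by (induction A rule: finite_induct) (auto intro: QQ_add simp: QQ_of_int[of 0, simplified])

lemma QQ_prod: "finite A \<Longrightarrow> (\<And>a. a \<in> A \<Longrightarrow> f a \<in> QQ d) \<Longrightarrow> prod f A \<in> QQ d"
  by (induction A rule: finite_induct) (auto intro: QQ_mult simp: QQ_of_int[of 1, simplified])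

definition ZD :: "real \<Rightarrow> real set" where
  "ZD d = {y. \<exists>s :: int poly. y = poly (of_int_poly s) d}"

lemma ZD_add: assumes "x \<in> ZD d" "y \<in> ZD d" shows "x + y \<in> ZD d"
proof -
  obtain q r where "x = poly (of_int_poly q) d" "y = poly (of_int_poly r) d" using assms unfolding ZD_def by auto
  then have "x + y = poly (of_int_poly (q + r)) d" by (simp add: hom_distribs)
  then show ?thesis unfolding ZD_def by blast
qed

lemma ZD_mult: assumes "x \<in> ZD d" "y \<in> ZD d" shows "x * y \<in> ZD d"
proof -
  obtain q r where "x = poly (of_int_poly q) d" "y = poly (of_int_poly r) d" using assms unfolding ZD_def by auto
  then have "x * y = poly (of_int_poly (q * r)) d" by (simp add: hom_distribs)
  then show ?thesis unfolding ZD_def by blast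
qed

lemma ZD_of_int: "of_int c \<in> ZD d"
  unfolding ZD_def by (rule CollectI, rule exI[of _ "[:c:]"]) (simp add: hom_distribs)

lemma ZD_sum: "finite A \<Longrightarrow> (\<And>a. a \<in> A \<Longrightarrow> f a \<in> ZD d) \<Longrightarrow> sum f A \<in> ZD d"
  by (induction A rule: finite_induct) (auto intro: ZD_add simp: ZD_of_int[of 0, simplified])

lemma ZD_QQ: assumes "x \<in> ZD d" shows "x \<in> QQ d"
proof -
  obtain q where "x = poly (of_int_poly q) d" using assms unfolding ZD_def by auto
  then have "x = poly (map_poly of_rat (of_int_poly q)) d" by (simp add: map_poly_map_poly o_def)
  then show ?thesis unfolding QQ_def by blast
qed

lemma QQ_denom: assumes "x \<in> QQ d" shows "\<exists>D::int. D > 0 \<and> of_int D * x \<in> ZD d"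
proof -
  obtain q where q: "x = poly (map_poly of_rat q) d" using assms unfolding QQ_def by auto
  obtain D s where r: "rat_to_int_poly q = (D, s)" by (cases "rat_to_int_poly q") auto
  from rat_to_int_poly[OF r] have qq: "q = Polynomial.smult (inverse (rat_of_int D)) (of_int_poly s)" and D: "D > 0" by auto
  have "of_int D * x = poly (of_int_poly s) d"
    unfolding q qq using D by (simp add: hom_distribs map_poly_map_poly o_def)
  then show ?thesis using D unfolding ZD_def by auto
qed

lemma QQ_common_denom: assumes "finite A" "A \<subseteq> QQ d" shows "\<exists>D::int. D > 0 \<and> (\<forall>a\<in>A. of_int D * a \<in> ZD d)"
  using assms
proof (induction A rule: finite_induct)
  case empty then show ?case by (auto intro: exI[of _ 1])
next
  case (insert a A)
  then obtain D where D: "D > 0" "\<forall>b\<in>A. of_int D * b \<in> ZD d" by auto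
  obtain E where E: "E > 0" "of_int E * a \<in> ZD d" using QQ_denom[of a d] insert.prems by auto
  have "\<forall>b\<in>insert a A. of_int (D * E) * b \<in> ZD d"
  proof
    fix b assume "b \<in> insert a A"
    then show "of_int (D * E) * b \<in> ZD d"
    proof
      assume "b = a" then show ?thesis using ZD_mult[OF ZD_of_int[of D] E(2)] by (simp add: ac_simps)
    next
      assume "b \<in> A" then show ?thesis using ZD_mult[OF ZD_of_int[of E] D(2)[rule_format, of b]] by (simp add: ac_simps)
    qed
  qed
  then show ?case using D E by (intro exI[of _ "D*E"]) simp
qed



locale mp =
  fixes P :: "int poly" and dl :: real
  assumes irr: "irreducible P" and mon: "lead_coeff P = 1"
    and root: "poly (of_int_poly P) dl = 0" and unit: "coeff P 0 = 1 \<or> coeff P 0 = -1"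
    and dl1: "dl > 1"
begin

definition R :: "complex set" where "R = {x. poly (of_int_poly P) x = 0}"

definition emb :: "complex \<Rightarrow> real \<Rightarrow> complex" where
  "emb a x = poly (map_poly of_rat (SOME q. x = poly (map_poly of_rat q) dl)) a"

lemma P0: "P \<noteq> 0" using mon by auto

lemma Pq_irr: "irreducible (of_int_poly P :: rat poly)"
proof -
  have prim: "primitive P"
  proof (rule primitiveI)
    fix x assume "\<And>y. y \<in> set (coeffs P) \<Longrightarrow> x dvd y"
    then have "x dvd lead_coeff P" using coeff_in_coeffs[OF P0, of "degree P"] by simp
    then show "x dvd 1" using mon by simp
  qed
  have "irreducible\<^sub>d P" using irreducible_primitive_connect[OF prim] irr by simp
  then have "irreducible\<^sub>d (of_int_poly P :: rat poly)" by (rule irreducible\<^sub>d_int_rat)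
  then show ?thesis using irreducible_connect_field by blast
qed

lemma map_rat_int: "map_poly (of_rat :: rat \<Rightarrow> 'a::field_char_0) (of_int_poly P) = of_int_poly P"
  by (simp add: map_poly_map_poly o_def)

lemma dvd_of_root:
  assumes q: "poly (map_poly of_rat q) dl = (0::real)"
  shows "(of_int_poly P :: rat poly) dvd q"
proof -
  let ?Pq = "of_int_poly P :: rat poly"
  obtain x y where xy: "bezout_coefficients ?Pq q = (x, y)" by (cases "bezout_coefficients ?Pq q") auto
  have bz: "x * ?Pq + y * q = gcd ?Pq q" using bezout_coefficients[OF xy] .
  obtain h where h: "?Pq = gcd ?Pq q * h" by (meson dvd_def gcd_dvd1)
  from irreducibleD[OF Pq_irr h] show ?thesis
  proof
    assume u: "gcd ?Pq q dvd 1"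
    then obtain c where c: "gcd ?Pq q = [:c:]" "c dvd 1" using is_unit_poly_iff by blast
    have c0: "c \<noteq> 0" using c(2) by auto
    have "poly (map_poly of_rat (x * ?Pq + y * q)) dl = (0::real)"
      using q root by (simp add: of_rat_poly_hom.hom_mult hom_distribs map_rat_int)
    then have "(of_rat c :: real) = 0" unfolding bz c by (simp add: hom_distribs)
    then show ?thesis using c0 by simp
  next
    assume "h dvd 1"
    then obtain h' where "1 = h * h'" by (auto simp: dvd_def)
    then have "gcd ?Pq q = ?Pq * h'" using h by (metis mult.assoc mult.right_neutral)
    then have "?Pq dvd gcd ?Pq q" by simp
    then show ?thesis using gcd_dvd2 dvd_trans by blast
  qed
qed

lemma root_transfer:
  assumes a: "a \<in> R" and q: "poly (map_poly of_rat q) dl = (0::real)"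
  shows "poly (map_poly of_rat q) a = 0"
proof -
  obtain s where s: "q = of_int_poly P * s" using dvd_of_root[OF q] by (auto simp: dvd_def)
  have "poly (of_int_poly P) a = 0" using a unfolding R_def by simp
  then show ?thesis unfolding s by (simp add: of_rat_poly_hom.hom_mult map_rat_int)
qed

lemma emb_poly:
  assumes a: "a \<in> R" shows "emb a (poly (map_poly of_rat q) dl) = poly (map_poly of_rat q) a"
proof -
  define q' where "q' = (SOME q'. poly (map_poly of_rat q) dl = poly (map_poly of_rat q') dl)"
  have "poly (map_poly of_rat q) dl = poly (map_poly of_rat q') (dl::real)"
    unfolding q'_def by (rule someI[of _ q]) simp
  then have "poly (map_poly of_rat (q' - q)) dl = (0::real)" by (simp add: hom_distribs)
  then have "poly (map_poly of_rat (q' - q)) a = 0" by (rule root_transfer[OF a])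
  then show ?thesis unfolding emb_def q'_def[symmetric] by (simp add: hom_distribs)
qed

lemma emb_int_poly:
  assumes a: "a \<in> R" shows "emb a (poly (of_int_poly s) dl) = poly (of_int_poly s) a"
  using emb_poly[OF a, of "of_int_poly s"] by (simp add: map_poly_map_poly o_def)

lemma emb_add: assumes "a \<in> R" "x \<in> QQ dl" "y \<in> QQ dl" shows "emb a (x + y) = emb a x + emb a y"
proof -
  obtain q r where "x = poly (map_poly of_rat q) dl" "y = poly (map_poly of_rat r) dl" using assms unfolding QQ_def by auto
  then show ?thesis using emb_poly[OF assms(1), of "q + r"] emb_poly[OF assms(1), of q] emb_poly[OF assms(1), of r]
    by (simp add: hom_distribs)
qed

lemma emb_mult: assumes "a \<in> R" "x \<in> QQ dl" "y \<in> QQ dl" shows "emb a (x * y) = emb a x * emb a y"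
proof -
  obtain q r where "x = poly (map_poly of_rat q) dl" "y = poly (map_poly of_rat r) dl" using assms unfolding QQ_def by auto
  then show ?thesis using emb_poly[OF assms(1), of "q * r"] emb_poly[OF assms(1), of q] emb_poly[OF assms(1), of r]
    by (simp add: hom_distribs of_rat_poly_hom.hom_mult)
qed

lemma emb_of_int: assumes "a \<in> R" shows "emb a (of_int c) = of_int c"
  using emb_poly[OF assms, of "[:of_int c:]"] by (simp add: hom_distribs)

lemma emb_dl: assumes "a \<in> R" shows "emb a dl = a"
  using emb_poly[OF assms, of "[:0,1:]"] by (simp add: hom_distribs)

lemma emb_field: assumes "a \<in> R" shows "field_embedding (QQ dl) (emb a)"
  unfolding field_embedding_def using emb_add[OF assms] emb_mult[OF assms] emb_of_int[OF assms, of 1] by simp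

lemma emb_sum: assumes "a \<in> R" "finite A" "\<And>i. i \<in> A \<Longrightarrow> f i \<in> QQ dl"
  shows "emb a (sum f A) = (\<Sum>i\<in>A. emb a (f i))"
  using assms(2,3)
proof (induction A rule: finite_induct)
  case empty then show ?case using emb_of_int[OF assms(1), of 0] by simp
next
  case (insert x F)
  then show ?case by (simp add: emb_add[OF assms(1)] QQ_sum)
qed

lemma emb_power: assumes "a \<in> R" "x \<in> QQ dl" shows "emb a (x ^ n) = emb a x ^ n"
proof (induction n)
  case 0 then show ?case using emb_of_int[OF assms(1), of 1] by simp
next
  case (Suc n)
  have "x ^ n \<in> QQ dl" using QQ_prod[of "{..<n}" "\<lambda>_. x" dl] assms(2) by simp
  then show ?case using Suc emb_mult[OF assms(1) assms(2)] by simp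
qed

lemma dl_inv_ZD: "inverse dl \<in> ZD dl"
proof -
  obtain c Q where PQ: "P = pCons c Q" by (cases P) auto
  have c: "c = coeff P 0" using PQ by simp
  have "0 = of_int c + dl * poly (of_int_poly Q) dl" using root unfolding PQ by (simp add: hom_distribs)
  then have "inverse dl = poly (of_int_poly (Polynomial.smult (- c) Q)) dl"
    using unit dl1 unfolding c[symmetric] by (auto simp: hom_distribs field_simps)
  then show ?thesis unfolding ZD_def by blast
qed

lemma R_nonzero: "a \<in> R \<Longrightarrow> a \<noteq> 0"
proof
  assume "a \<in> R" "a = 0"
  then have "poly (of_int_poly P) (0::complex) = 0" unfolding R_def by simp
  then have "(of_int (coeff P 0) :: complex) = 0" by (simp add: poly_0_coeff_0)
  then show False using unit by auto
qed

lemma dl_R: "complex_of_real dl \<in> R"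
proof -
  have "poly (of_int_poly P) (complex_of_real dl) = complex_of_real (poly (of_int_poly P) dl)"
    using of_real_hom.poly_map_poly[of "of_int_poly P" dl] by (simp add: map_poly_map_poly o_def)
  then show ?thesis using root unfolding R_def by simp
qed

lemma R_finite: "finite R"
  unfolding R_def using P0 by (intro poly_roots_finite) simp

lemma R_card: "card R = degree P"
proof -
  have "irreducible\<^sub>d (of_int_poly P :: rat poly)" using Pq_irr irreducible_connect_field by blast
  then have "square_free (of_int_poly P :: rat poly)" by (rule irreducible\<^sub>d_square_free)
  then have "square_free (map_poly (of_rat :: rat \<Rightarrow> complex) (of_int_poly P))"
    using field_hom_0'.square_free_map_poly[OF field_hom_0'.intro[OF of_rat_hom.field_hom_axioms]] by blast
  then have sf: "square_free (of_int_poly P :: complex poly)" by (simp add: map_rat_int)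
  have "rsquarefree (of_int_poly P :: complex poly)" using square_free_rsquarefree[OF sf] .
  then have "card {x. poly (of_int_poly P) x = (0::complex)} = degree (of_int_poly P :: complex poly)"
    using rsquarefree_card_degree P0 by auto
  then show ?thesis unfolding R_def by simp
qed

lemma degree_ge2: "degree P \<ge> 2"
proof (rule ccontr)
  assume "\<not> degree P \<ge> 2"
  then have "degree P = 0 \<or> degree P = 1" by auto
  then show False
  proof
    assume "degree P = 0"
    then have "P = [:1:]" using mon by (metis degree_0_id)
    then show False using root by simp
  next
    assume d1: "degree P = 1"
    have "poly (of_int_poly P) dl = (\<Sum>i\<le>degree P. of_int (coeff P i) * dl ^ i)"
      by (simp add: poly_altdef)
    then have "0 = of_int (coeff P 0) + dl" using root d1 mon by simp
    then show False using unit dl1 by auto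
  qed
qed

end



lemma lagrange_bound:
  fixes R :: "complex set" assumes fin: "finite R"
  shows "\<exists>K\<ge>0. \<forall>f B. degree f < card R \<longrightarrow> (\<forall>a\<in>R. cmod (poly f a) \<le> B) \<longrightarrow> (\<forall>k. cmod (coeff f k) \<le> K * B)"
proof -
  define L where "L a = Polynomial.smult (inverse (\<Prod>b\<in>R-{a}. a - b)) (\<Prod>b\<in>R-{a}. [:-b,1:])" for a
  have Lval: "poly (L a) c = (if c = a then 1 else 0)" if "a \<in> R" "c \<in> R" for a c
  proof -
    have pl: "poly (L a) c = inverse (\<Prod>b\<in>R-{a}. a - b) * (\<Prod>b\<in>R-{a}. c - b)"
      unfolding L_def by (simp add: poly_prod)
    show ?thesis
    proof (cases "c = a")
      case True
      have "(\<Prod>b\<in>R-{a}. a - b) \<noteq> 0" using fin by (subst prod_zero_iff) auto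
      then show ?thesis using True pl by simp
    next
      case False
      have "(\<Prod>b\<in>R-{a}. c - b) = 0" using fin that False by (subst prod_zero_iff) auto
      then show ?thesis using False pl by simp
    qed
  qed
  have Ldeg: "degree (L a) \<le> card R - 1" if "a \<in> R" for a
  proof -
    have "degree (L a) \<le> degree (\<Prod>b\<in>R-{a}. [:-b,1:])" unfolding L_def by (rule degree_smult_le)
    also have "\<dots> \<le> (\<Sum>b\<in>R-{a}. degree [:-b,1:])" using degree_prod_sum_le[of "R-{a}" "\<lambda>b. [:-b,1:]"] fin by (simp add: o_def)
    also have "\<dots> = card (R - {a})" by simp
    also have "\<dots> = card R - 1" using that fin by simp
    finally show ?thesis .
  qed
  have interp: "f = (\<Sum>a\<in>R. Polynomial.smult (poly f a) (L a))" if df: "degree f < card R" for f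
  proof (rule ccontr)
    define h where "h = f - (\<Sum>a\<in>R. Polynomial.smult (poly f a) (L a))"
    assume "f \<noteq> (\<Sum>a\<in>R. Polynomial.smult (poly f a) (L a))"
    then have h0: "h \<noteq> 0" unfolding h_def by simp
    have "degree (\<Sum>a\<in>R. Polynomial.smult (poly f a) (L a)) \<le> card R - 1"
      using fin by (intro degree_sum_le) (use Ldeg in \<open>auto intro: order.trans[OF degree_smult_le]\<close>)
    moreover have "degree f \<le> card R - 1" using df by simp
    ultimately have dh: "degree h \<le> card R - 1" unfolding h_def by (meson degree_diff_le)
    have "poly h c = 0" if c: "c \<in> R" for c
    proof -
      have "poly (\<Sum>a\<in>R. Polynomial.smult (poly f a) (L a)) c = (\<Sum>a\<in>R. if c = a then poly f a else 0)"
        by (simp add: poly_sum Lval[OF _ c] if_distrib cong: if_cong)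
      also have "\<dots> = poly f c" using fin c by (simp add: sum.delta)
      finally show ?thesis unfolding h_def by simp
    qed
    then have "R \<subseteq> {x. poly h x = 0}" by auto
    then have "card R \<le> card {x. poly h x = 0}" using poly_roots_finite[OF h0] by (rule card_mono[rotated])
    also have "\<dots> \<le> degree h" using card_poly_roots_bound[OF h0] .
    finally show False using dh df by linarith
  qed
  define K where "K = (\<Sum>a\<in>R. \<Sum>k<card R. cmod (coeff (L a) k))"
  have K0: "K \<ge> 0" unfolding K_def by (intro sum_nonneg) auto
  have main: "cmod (coeff f k) \<le> K * B" if df: "degree f < card R" and bd: "\<forall>a\<in>R. cmod (poly f a) \<le> B" for f B k
  proof -
    have Rne: "R \<noteq> {}" using df by auto
    then obtain a0 where "a0 \<in> R" by auto
    then have B0: "B \<ge> 0" using bd by (meson norm_ge_zero order.trans)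
    show ?thesis
    proof (cases "k < card R")
      case False
      then have "coeff f k = 0" using df by (intro coeff_eq_0) simp
      then show ?thesis using K0 B0 by simp
    next
      case True
      have "coeff f k = (\<Sum>a\<in>R. poly f a * coeff (L a) k)"
        by (subst interp[OF df]) (simp add: coeff_sum)
      then have "cmod (coeff f k) \<le> (\<Sum>a\<in>R. cmod (poly f a) * cmod (coeff (L a) k))"
        by (metis (no_types, lifting) norm_mult norm_sum sum.cong)
      also have "\<dots> \<le> (\<Sum>a\<in>R. B * (\<Sum>k<card R. cmod (coeff (L a) k)))"
      proof (rule sum_mono)
        fix a assume a: "a \<in> R"
        have "cmod (coeff (L a) k) \<le> (\<Sum>k<card R. cmod (coeff (L a) k))"
          using True by (intro member_le_sum) auto
        then show "cmod (poly f a) * cmod (coeff (L a) k) \<le> B * (\<Sum>k<card R. cmod (coeff (L a) k))"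
          using bd a B0 by (intro mult_mono) auto
      qed
      also have "\<dots> = K * B" unfolding K_def by (simp add: sum_distrib_left mult.commute)
      finally show ?thesis .
    qed
  qed
  show ?thesis using K0 main by blast
qed

lemma finite_bounded_int_polys: "finite {s::int poly. degree s < n \<and> (\<forall>k. \<bar>coeff s k\<bar> \<le> N)}"
proof -
  have "{s::int poly. degree s < n \<and> (\<forall>k. \<bar>coeff s k\<bar> \<le> N)} \<subseteq> Poly ` {xs. set xs \<subseteq> {-N..N} \<and> length xs \<le> n}"
  proof
    fix s :: "int poly" assume s: "s \<in> {s. degree s < n \<and> (\<forall>k. \<bar>coeff s k\<bar> \<le> N)}"
    have "set (coeffs s) \<subseteq> {-N..N}"
    proof
      fix c assume "c \<in> set (coeffs s)"
      then obtain i where "c = coeff s i" by (auto simp: coeffs_def split: if_splits)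
      moreover have "\<bar>coeff s i\<bar> \<le> N" using s by auto
      ultimately show "c \<in> {-N..N}" by (simp add: abs_le_iff)
    qed
    moreover have "length (coeffs s) \<le> n" using s by (cases "s = 0") (auto simp: length_coeffs_degree)
    ultimately show "s \<in> Poly ` {xs. set xs \<subseteq> {-N..N} \<and> length xs \<le> n}"
      by (intro image_eqI[of _ _ "coeffs s"]) auto
  qed
  moreover have "finite (Poly ` {xs. set xs \<subseteq> {-N..N} \<and> length xs \<le> n})"
    by (intro finite_imageI finite_lists_length_le) simp
  ultimately show ?thesis by (rule finite_subset)
qed

context mp begin

lemma QQ_div_int: assumes "of_int D * y \<in> ZD dl" "D \<noteq> 0" shows "y \<in> QQ dl"
proof -
  have "y = of_rat (inverse (of_int D)) * (of_int D * y)" using assms(2) by (simp add: of_rat_inverse)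
  then show ?thesis using QQ_mult[OF QQ_of_rat ZD_QQ[OF assms(1)]] by metis
qed

lemma finite_F:
  assumes D: "D > 0"
  shows "finite {y. 0 \<le> y \<and> y < 1 \<and> of_int D * y \<in> ZD dl \<and> (\<forall>a\<in>R-{complex_of_real dl}. cmod (emb a y) \<le> B)}"
proof -
  obtain K where K0: "K \<ge> 0" and K: "\<And>f B. degree f < card R \<Longrightarrow> (\<forall>a\<in>R. cmod (poly f a) \<le> B) \<Longrightarrow> (\<forall>k. cmod (coeff f k) \<le> K * B)"
    using lagrange_bound[OF R_finite] by blast
  define B' where "B' = of_int D * max B 1"
  define N where "N = \<lfloor>K * B'\<rfloor>"
  define S where "S = {s::int poly. degree s < degree P \<and> (\<forall>k. \<bar>coeff s k\<bar> \<le> N)}"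
  have "{y. 0 \<le> y \<and> y < 1 \<and> of_int D * y \<in> ZD dl \<and> (\<forall>a\<in>R-{complex_of_real dl}. cmod (emb a y) \<le> B)}
        \<subseteq> (\<lambda>s. poly (of_int_poly s) dl / of_int D) ` S"
  proof
    fix y assume "y \<in> {y. 0 \<le> y \<and> y < 1 \<and> of_int D * y \<in> ZD dl \<and> (\<forall>a\<in>R-{complex_of_real dl}. cmod (emb a y) \<le> B)}"
    then have y0: "0 \<le> y" and y1: "y < 1" and yZ: "of_int D * y \<in> ZD dl" and yB: "\<forall>a\<in>R-{complex_of_real dl}. cmod (emb a y) \<le> B"
      by auto
    obtain s0 where s0: "of_int D * y = poly (of_int_poly s0) dl" using yZ unfolding ZD_def by auto
    obtain q r where qr: "pseudo_divmod s0 P = (q, r)" by (cases "pseudo_divmod s0 P") auto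
    have sqr: "s0 = P * q + r" using pseudo_divmod(1)[OF P0 qr] mon by simp
    have dr: "degree r < degree P" using pseudo_divmod(2)[OF P0 qr] degree_ge2 by auto
    have pr: "poly (of_int_poly r) x = poly (of_int_poly s0) x" if "poly (of_int_poly P) x = 0" for x :: "'a::comm_ring_1"
      using that unfolding sqr by (simp add: hom_distribs)
    have yQ: "y \<in> QQ dl" using QQ_div_int[OF yZ] D by simp
    have bound: "\<forall>a\<in>R. cmod (poly (of_int_poly r) a) \<le> B'"
    proof
      fix a assume a: "a \<in> R"
      have pa: "poly (of_int_poly r) a = poly (of_int_poly s0) a" using a pr unfolding R_def by simp
      show "cmod (poly (of_int_poly r) a) \<le> B'"
      proof (cases "a = complex_of_real dl")
        case True
        have "poly (of_int_poly r) a = complex_of_real (poly (of_int_poly r) dl)"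
          unfolding True using of_real_hom.poly_map_poly[of "of_int_poly r" dl] by (simp add: map_poly_map_poly o_def)
        also have "poly (of_int_poly r) dl = of_int D * y" using pr[OF root] s0 by simp
        finally have "cmod (poly (of_int_poly r) a) = of_int D * y" using D y0 by (simp add: norm_mult)
        also have "\<dots> \<le> of_int D * max B 1" using y1 D by (intro mult_left_mono) auto
        finally show ?thesis unfolding B'_def .
      next
        case False
        have "poly (of_int_poly s0) a = emb a (of_int D * y)" unfolding s0 emb_int_poly[OF a] ..
        also have "\<dots> = of_int D * emb a y" using emb_mult[OF a QQ_of_int yQ] emb_of_int[OF a] by simp
        finally have "cmod (poly (of_int_poly r) a) = of_int D * cmod (emb a y)" using pa D by (simp add: norm_mult)
        also have "\<dots> \<le> of_int D * max B 1" using yB a False D by (intro mult_left_mono) force+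
        finally show ?thesis unfolding B'_def .
      qed
    qed
    have "degree (of_int_poly r :: complex poly) < card R" using dr R_card by simp
    from K[OF this bound] have "\<forall>k. cmod (coeff (of_int_poly r :: complex poly) k) \<le> K * B'" .
    then have "\<forall>k. \<bar>coeff r k\<bar> \<le> N" unfolding N_def by (simp add: le_floor_iff)
    then have rS: "r \<in> S" unfolding S_def using dr by simp
    have "y = poly (of_int_poly r) dl / of_int D" using pr[OF root] s0 D by (simp add: field_simps)
    then show "y \<in> (\<lambda>s. poly (of_int_poly s) dl / of_int D) ` S" using rS by blast
  qed
  moreover have "finite S" unfolding S_def by (rule finite_bounded_int_polys)
  ultimately show ?thesis by (meson finite_imageI finite_subset)
qed

end



theorem lemma7:
  fixes bs :: "real list"
  assumes "alt_base bs"
    and "pisot_unit (delta bs)"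
    and "\<forall>b\<in>set bs. b \<in> QQ (delta bs)"
  shows "\<exists>\<kappa>>0. \<forall>z \<in> beta_integers bs - (\<lambda>w. delta bs * w) ` beta_integers bs.
           \<exists>\<psi>. field_embedding (QQ (delta bs)) \<psi> \<and>
                (\<exists>x\<in>QQ (delta bs). \<psi> x \<noteq> complex_of_real x) \<and>
                cmod (\<psi> z) \<ge> \<kappa>"
proof -
  note ab = assms(1)
  define dl where "dl = delta bs"
  obtain P :: "int poly" where Pm: "lead_coeff P = 1" and Pi: "irreducible P"
    and Pr: "poly (map_poly of_int P) dl = 0" and Pu: "coeff P 0 = 1 \<or> coeff P 0 = -1"
    and Pc: "\<forall>z::complex. poly (map_poly of_int P) z = 0 \<and> z \<noteq> complex_of_real dl \<longrightarrow> cmod z < 1"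
    using assms(2) unfolding pisot_unit_def dl_def by blast
  have dl1: "dl > 1" unfolding dl_def using delta_gt1[OF ab] .
  interpret mp P dl using Pm Pi Pr Pu dl1 by unfold_locales auto
  have ne: "bs \<noteq> []" using ab unfolding alt_base_def by auto
  define R' where "R' = R - {complex_of_real dl}"
  have R'fin: "finite R'" unfolding R'_def using R_finite by simp
  have R'ne: "R' \<noteq> {}"
  proof
    assume "R' = {}"
    then have "R \<subseteq> {complex_of_real dl}" unfolding R'_def by auto
    then have "card R \<le> 1" using card_mono[of "{complex_of_real dl}" R] by simp
    then show False using R_card degree_ge2 by simp
  qed
  have R'R: "a \<in> R' \<Longrightarrow> a \<in> R" for a unfolding R'_def by simp
  have R'lt: "a \<in> R' \<Longrightarrow> cmod a < 1" for a using Pc unfolding R'_def R_def by auto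
  have R'pos: "a \<in> R' \<Longrightarrow> cmod a > 0" for a using R_nonzero[OF R'R] by simp
  define \<pi> where "\<pi> k = (\<Prod>l=Suc k..length bs. bseq bs l)" for k
  have bQ: "bseq bs l \<in> QQ dl" for l using assms(3) bseq_in_set[OF ne] unfolding dl_def by blast
  have \<pi>Q: "\<pi> k \<in> QQ dl" for k unfolding \<pi>_def by (intro QQ_prod bQ) auto
  obtain D :: int where D0: "D > 0" and DZ: "\<forall>a\<in>\<pi> ` {1..length bs}. of_int D * a \<in> ZD dl"
    using QQ_common_denom[of "\<pi> ` {1..length bs}" dl] \<pi>Q by auto
  define Mx where "Mx = Max (set bs)"
  have bMx: "bseq bs k \<le> Mx" for k unfolding Mx_def using bseq_in_set[OF ne] by simp
  define A where "A a = (\<Sum>k=1..length bs. Mx * cmod (emb a (\<pi> k)))" for a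
  define C where "C a = A a / (1 - cmod a)" for a
  have Mx0: "Mx \<ge> 0" using bMx[of 0] bseq_nonneg[OF ab, of 0] by simp
  have A0: "A a \<ge> 0" for a unfolding A_def using Mx0 by (intro sum_nonneg) auto
  have C0: "C a \<ge> 0" if "a \<in> R'" for a unfolding C_def using A0[of a] R'lt[OF that] by simp
  have CA: "a \<in> R' \<Longrightarrow> cmod a * C a + A a = C a" for a
    unfolding C_def using R'lt[of a] by (simp add: field_simps)
  define B where "B = (\<Sum>a\<in>R'. C a) + 1"
  have CB: "C a + 1 \<le> B" if "a \<in> R'" for a
  proof -
    have "C a \<le> sum C R'" using that R'fin C0 by (intro member_le_sum) auto
    then show ?thesis unfolding B_def by simp
  qed
  define F where "F = {y. 0 \<le> y \<and> y < 1 \<and> of_int D * y \<in> ZD dl \<and> (\<forall>a\<in>R-{complex_of_real dl}. cmod (emb a y) \<le> B)}"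
  have Ffin: "finite F" unfolding F_def by (rule finite_F[OF D0])
  define M where "M = card F + 1"
  define \<mu> where "\<mu> = Min (cmod ` R')"
  have \<mu>0: "\<mu> > 0" unfolding \<mu>_def using R'fin R'ne R'pos by (subst Min_gr_iff) auto
  have \<mu>le: "a \<in> R' \<Longrightarrow> \<mu> \<le> cmod a" for a unfolding \<mu>_def using R'fin by simp
  define \<kappa> where "\<kappa> = \<mu> ^ M"
  have \<kappa>0: "\<kappa> > 0" unfolding \<kappa>_def using \<mu>0 by simp
  show ?thesis
  proof (intro exI[of _ \<kappa>] conjI \<kappa>0 ballI)
    fix z assume zin: "z \<in> beta_integers bs - (\<lambda>w. delta bs * w) ` beta_integers bs"
    show "\<exists>\<psi>. field_embedding (QQ (delta bs)) \<psi> \<and> (\<exists>x\<in>QQ (delta bs). \<psi> x \<noteq> complex_of_real x) \<and> cmod (\<psi> z) \<ge> \<kappa>"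
    proof (rule ccontr)
      assume nex: "\<not> ?thesis"
      have small: "cmod (emb a z) < \<kappa>" if a: "a \<in> R'" for a
      proof (rule ccontr)
        assume "\<not> cmod (emb a z) < \<kappa>"
        moreover have "field_embedding (QQ (delta bs)) (emb a)" using emb_field[OF R'R[OF a]] unfolding dl_def .
        moreover have "emb a dl \<noteq> complex_of_real dl" using emb_dl[OF R'R[OF a]] a unfolding R'_def by simp
        ultimately show False using nex QQ_d[of dl] unfolding dl_def by fastforce
      qed
      obtain k0 where wit: "\<forall>k\<ge>k0. 0 \<le> z \<and> z / delta bs ^ k < 1 \<and> (\<forall>j > length bs * k. gdigit bs (z / delta bs ^ k) j = 0)"
        using beta_int_witness[OF ab] zin by blast
      define K where "K = k0 + M"
      have KM: "M \<le> K" unfolding K_def by simp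
      have K1: "K \<ge> 1" unfolding K_def M_def by simp
      have z0: "0 \<le> z" and x1: "z / dl ^ K < 1" and xdig: "\<forall>j > length bs * K. gdigit bs (z / dl ^ K) j = 0"
        using wit[rule_format, of K] unfolding K_def dl_def by auto
      define x where "x = z / dl ^ K"
      have x0: "0 \<le> x" unfolding x_def using z0 dl1 by simp
      have x1': "x < 1" using x1 unfolding x_def .
      define r where "r i = grem bs x i" for i
      have rb: "0 \<le> r i \<and> r i < 1" for i unfolding r_def using grem_bounds[OF x0 x1'] .
      have rK: "r (K * length bs) = 0" unfolding r_def
        using digits_zero_grem[OF ab x0 x1'] xdig unfolding x_def by (simp add: mult.commute)
      define e where "e m = (\<Sum>k=1..length bs. of_int (gdigit bs (r (m * length bs)) k) * \<pi> k)" for m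
      have blk: "dl * r (m * length bs) = r (Suc m * length bs) + e m" for m
      proof -
        have "(\<Prod>k=1..length bs. bseq bs k) * r (m * length bs)
              = grem bs (r (m * length bs)) (length bs) + e m"
          unfolding e_def \<pi>_def by (rule block_rec)
        moreover have "grem bs (r (m * length bs)) (length bs) = r (Suc m * length bs)"
          unfolding r_def using grem_shift[of bs x m "length bs"] by (simp add: add.commute)
        ultimately show ?thesis using delta_prod[OF ne] unfolding dl_def by simp
      qed
      have dig: "0 \<le> gdigit bs (r (m * length bs)) k \<and> of_int (gdigit bs (r (m * length bs)) k) \<le> Mx" if "k \<ge> 1" for m k
        using gdigit_bounds[OF ab _ _ that, of "r (m * length bs)"] rb[of "m * length bs"] bMx[of k] by auto
      have eZ: "of_int D * e m \<in> ZD dl" for m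
      proof -
        have "of_int D * e m = (\<Sum>k=1..length bs. of_int (gdigit bs (r (m * length bs)) k) * (of_int D * \<pi> k))"
          unfolding e_def by (simp add: sum_distrib_left ac_simps)
        also have "\<dots> \<in> ZD dl"
        proof (rule ZD_sum)
          fix k assume k: "k \<in> {1..length bs}"
          show "of_int (gdigit bs (r (m * length bs)) k) * (of_int D * \<pi> k) \<in> ZD dl"
            by (rule ZD_mult[OF ZD_of_int]) (use DZ k in auto)
        qed simp
        finally show ?thesis .
      qed
      have eQ: "e m \<in> QQ dl" for m using QQ_div_int[OF eZ] D0 by simp
      have eb: "cmod (emb a (e m)) \<le> A a" if a: "a \<in> R'" for a m
      proof -
        have "emb a (e m) = (\<Sum>k=1..length bs. of_int (gdigit bs (r (m * length bs)) k) * emb a (\<pi> k))"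
          unfolding e_def
          by (subst emb_sum[OF R'R[OF a]]) (auto simp: emb_mult[OF R'R[OF a] QQ_of_int \<pi>Q] emb_of_int[OF R'R[OF a]]
            QQ_mult[OF QQ_of_int \<pi>Q])
        then have "cmod (emb a (e m)) \<le> (\<Sum>k=1..length bs. cmod (of_int (gdigit bs (r (m * length bs)) k) * emb a (\<pi> k)))"
          by (simp add: norm_sum)
        also have "\<dots> \<le> A a" unfolding A_def
        proof (rule sum_mono)
          fix k assume k: "k \<in> {1..length bs}"
          have "cmod (of_int (gdigit bs (r (m * length bs)) k) :: complex) \<le> Mx"
            using dig[of k m] k by simp
          then show "cmod (of_int (gdigit bs (r (m * length bs)) k) * emb a (\<pi> k)) \<le> Mx * cmod (emb a (\<pi> k))"
            by (simp add: norm_mult mult_right_mono)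
        qed
        finally show ?thesis .
      qed
      have rZ: "of_int D * r ((K - j) * length bs) \<in> ZD dl" if "j \<le> K" for j
        using that
      proof (induction j)
        case 0 then show ?case using rK ZD_of_int[of 0 dl] by simp
      next
        case (Suc j)
        define m where "m = K - Suc j"
        have mm: "Suc m = K - j" unfolding m_def using Suc.prems by simp
        have "of_int D * r (m * length bs) = inverse dl * (of_int D * r (Suc m * length bs) + of_int D * e m)"
        proof -
          have "of_int D * r (m * length bs) = inverse dl * (of_int D * (dl * r (m * length bs)))"
            using dl1 by (simp add: field_simps)
          also have "\<dots> = inverse dl * (of_int D * r (Suc m * length bs) + of_int D * e m)"
            unfolding blk[of m] by (simp add: distrib_left)
          finally show ?thesis .
        qed
        also have "\<dots> \<in> ZD dl" 
        proof (rule ZD_mult[OF dl_inv_ZD], rule ZD_add[OF _ eZ])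
          show "of_int D * r (Suc m * length bs) \<in> ZD dl" using Suc.IH Suc.prems mm by simp
        qed
        finally show ?case unfolding m_def .
      qed
      have rQ: "r (m * length bs) \<in> QQ dl" if "m \<le> K" for m
        using QQ_div_int[OF rZ[of "K - m"]] that D0 by simp
      have drift: "cmod (emb a (r (m * length bs)) - a ^ m * emb a (r 0)) \<le> C a" if a: "a \<in> R'" and "m \<le> K" for a m
        using that(2)
      proof (induction m)
        case 0 then show ?case using C0[OF a] by simp
      next
        case (Suc m)
        have aR: "a \<in> R" using R'R[OF a] .
        have "emb a (r (Suc m * length bs)) + emb a (e m) = a * emb a (r (m * length bs))"
        proof -
          have "emb a (r (Suc m * length bs)) + emb a (e m) = emb a (r (Suc m * length bs) + e m)"
            using emb_add[OF aR rQ[OF Suc.prems] eQ] by simp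
          also have "\<dots> = emb a (dl * r (m * length bs))" using blk[of m] by simp
          also have "\<dots> = a * emb a (r (m * length bs))" using emb_mult[OF aR QQ_d rQ] emb_dl[OF aR] Suc.prems by simp
          finally show ?thesis .
        qed
        then have "emb a (r (Suc m * length bs)) - a ^ Suc m * emb a (r 0)
              = a * (emb a (r (m * length bs)) - a ^ m * emb a (r 0)) - emb a (e m)"
          by (simp add: algebra_simps)
        then have "cmod (emb a (r (Suc m * length bs)) - a ^ Suc m * emb a (r 0))
              \<le> cmod a * cmod (emb a (r (m * length bs)) - a ^ m * emb a (r 0)) + cmod (emb a (e m))"
          by (metis norm_mult norm_triangle_ineq4)
        also have "\<dots> \<le> cmod a * C a + A a"
          using Suc eb[OF a, of m] by (intro add_mono mult_left_mono) auto
        also have "\<dots> = C a" using CA[OF a] .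
        finally show ?case .
      qed
      have zr: "z = dl ^ K * r 0" unfolding r_def x_def using dl1 by simp
      have embz: "emb a z = a ^ K * emb a (r 0)" if a: "a \<in> R'" for a
      proof -
        have "dl ^ K \<in> QQ dl" using QQ_prod[of "{..<K}" "\<lambda>_. dl" dl] QQ_d by simp
        then show ?thesis unfolding zr using emb_mult[OF R'R[OF a] _ rQ[of 0]] emb_power[OF R'R[OF a] QQ_d] emb_dl[OF R'R[OF a]]
          by simp
      qed
      have inF: "r (m * length bs) \<in> F" if m: "K - M \<le> m" "m < K" for m
      proof -
        have bnd: "cmod (emb a (r (m * length bs))) \<le> B" if a: "a \<in> R'" for a
        proof -
          have ap: "cmod a > 0" "cmod a < 1" using R'pos[OF a] R'lt[OF a] by auto
          have "cmod a ^ K * cmod (emb a (r 0)) < \<kappa>" using small[OF a] embz[OF a] by (simp add: norm_mult norm_power)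
          also have "\<kappa> \<le> cmod a ^ M" unfolding \<kappa>_def using \<mu>le[OF a] \<mu>0 by (intro power_mono) auto
          also have "\<dots> \<le> cmod a ^ (K - m)" using ap m by (intro power_decreasing) auto
          finally have lt: "cmod a ^ K * cmod (emb a (r 0)) < cmod a ^ (K - m)" .
          have "cmod a ^ K = cmod a ^ (K - m) * cmod a ^ m" using m by (simp flip: power_add)
          then have "cmod a ^ (K - m) * (cmod a ^ m * cmod (emb a (r 0))) < cmod a ^ (K - m) * 1"
            using lt by (simp add: ac_simps)
          then have "cmod a ^ m * cmod (emb a (r 0)) < 1" using ap by (simp add: mult_less_cancel_left)
          then have "cmod (a ^ m * emb a (r 0)) \<le> 1" by (simp add: norm_mult norm_power)
          moreover have "cmod (emb a (r (m * length bs)) - a ^ m * emb a (r 0)) \<le> C a"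
            using drift[OF a] m by simp
          moreover have "cmod (emb a (r (m * length bs))) \<le> cmod (a ^ m * emb a (r 0)) + cmod (emb a (r (m * length bs)) - a ^ m * emb a (r 0))"
            by (rule norm_triangle_sub)
          ultimately have "cmod (emb a (r (m * length bs))) \<le> C a + 1"
            by linarith
          then show ?thesis using CB[OF a] by simp
        qed
        have "of_int D * r (m * length bs) \<in> ZD dl" using rZ[of "K - m"] m by simp
        then show ?thesis unfolding F_def using rb bnd unfolding R'_def by auto
      qed
      have noz: "r ((K - 1) * length bs) \<noteq> 0"
      proof
        assume h: "r ((K - 1) * length bs) = 0"
        define w where "w = z / dl"
        have "w \<in> beta_integers bs"
        proof -
          have wx: "w / delta bs ^ (K - 1) = x" unfolding w_def x_def dl_def using K1
            by (metis (no_types, lifting) One_nat_def Suc_pred divide_divide_eq_left less_eq_Suc_le mult.commute power_Suc)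
          have "\<forall>j > length bs * (K - 1). gdigit bs x j = 0"
          proof (intro allI impI)
            fix j assume j: "length bs * (K - 1) < j"
            have "r (j - 1) = 0" using grem_zero'[of bs x "(K - 1) * length bs" "j - 1"] h j unfolding r_def
              by (simp add: mult.commute)
            then show "gdigit bs x j = 0" unfolding gdigit_def r_def by simp
          qed
          moreover have "w \<ge> 0" unfolding w_def using z0 dl1 by simp
          ultimately show ?thesis unfolding beta_integers_def using wx x1' by auto
        qed
        moreover have "z = delta bs * w" unfolding w_def dl_def using dl1 unfolding dl_def by simp
        ultimately show False using zin by blast
      qed
      have inj: "inj_on (\<lambda>m. r (m * length bs)) {K - M..<K}"
      proof -
        have key: False if ab2: "a < b" "b < K" "r (a * length bs) = r (b * length bs)" for a b
        proof -
          have sh: "r (b * length bs + i) = r (a * length bs + i)" for i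
            unfolding r_def using grem_shift[of bs x b i] grem_shift[of bs x a i] ab2(3) unfolding r_def by simp
          have per: "r (a * length bs + c * ((b - a) * length bs)) = r (a * length bs)" for c
          proof (induction c)
            case 0 then show ?case by simp
          next
            case (Suc c)
            have "a * length bs + Suc c * ((b - a) * length bs) = b * length bs + c * ((b - a) * length bs)"
            proof -
              obtain d where "b = a + d" using ab2(1) less_imp_add_positive by blast
              then show ?thesis by (simp add: algebra_simps)
            qed
            then have "r (a * length bs + Suc c * ((b - a) * length bs)) = r (b * length bs + c * ((b - a) * length bs))"
              by (simp only:)
            also have "\<dots> = r (a * length bs + c * ((b - a) * length bs))" by (rule sh)
            also have "\<dots> = r (a * length bs)" by (rule Suc.IH)
            finally show ?case .
          qed
          have "K * length bs \<le> a * length bs + K * ((b - a) * length bs)"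
          proof -
            have "1 \<le> b - a" using ab2(1) by simp
            then have h1: "1 * length bs \<le> (b - a) * length bs" by (rule mult_right_mono) simp
            have "K * length bs \<le> K * ((b - a) * length bs)" using mult_le_mono2[OF h1[unfolded mult_1], of K] by blast
            then show ?thesis by linarith
          qed
          then have "r (a * length bs + K * ((b - a) * length bs)) = 0"
            using grem_zero'[of bs x "K * length bs"] rK unfolding r_def by blast
          then have "r (a * length bs) = 0" using per[of K] by simp
          moreover have "a * length bs \<le> (K - 1) * length bs" using ab2 by (intro mult_right_mono) auto
          ultimately have "r ((K - 1) * length bs) = 0"
            using grem_zero'[of bs x "a * length bs" "(K - 1) * length bs"] unfolding r_def by blast
          then show False using noz by simp
        qed
        show ?thesis
        proof (rule inj_onI)
          fix a b assume "a \<in> {K - M..<K}" "b \<in> {K - M..<K}" "r (a * length bs) = r (b * length bs)"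
          then show "a = b" using key[of a b] key[of b a] by (cases a b rule: linorder_cases) auto
        qed
      qed
      have "(\<lambda>m. r (m * length bs)) ` {K - M..<K} \<subseteq> F" using inF by auto
      then have "card ((\<lambda>m. r (m * length bs)) ` {K - M..<K}) \<le> card F" using Ffin by (rule card_mono[rotated])
      moreover have "card ((\<lambda>m. r (m * length bs)) ` {K - M..<K}) = M"
        using card_image[OF inj] KM by simp
      ultimately show False unfolding M_def by simp
    qed
  qed
qed

end
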